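(* Let $n=p_1^{\alpha_1}p_2^{\alpha_2}p_3^{\alpha_3}$, where $\alpha_1,\alpha_2,\alpha_3$ are positive integers and $p_1<p_2<p_3$ are primes. Let $\{i,j,k\}=\{1,2,3\}$ with $i<j$. If $(p_i+p_j)\,\phi(p_jp_k)-p_ip_jp_k>0$, then $\deg(p_i^{\beta_i}p_j)>\deg(p_j)$ in $\mathcal{P}(C_n)$ for every $1\leq\beta_i\leq\alpha_i$.
   Context: For a finite group $G$, the power graph $\mathcal{P}(G)$ is the simple undirected graph with vertex set $G$ in which two distinct vertices are adjacent if one is an integral power of the other. $C_n$ denotes the cyclic group of order $n$, identified with $\mathbb{Z}_n=\{0,1,\ldots,n-1\}$, so a positive divisor $d$ of $n$ is regarded as the element $d\bmod n\in\mathbb{Z}_n$. $\deg(a)$ is the degree of vertex $a$ in $\mathcal{P}(C_n)$ and $\phi$ is Euler's totient function. *)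

theory Defs
  imports "HOL-Number_Theory.Number_Theory"
begin

text \<open>Power graph of the cyclic group C_n, identified with Z_n = {0,...,n-1}
 (additive notation: the integral power a^k is k*a mod n).\<close>

definition cyc_power_adj :: "nat \<Rightarrow> nat \<Rightarrow> nat \<Rightarrow> bool" where
  "cyc_power_adj n a b \<longleftrightarrow> a \<noteq> b \<and>
     ((\<exists>k::int. int b = (k * int a) mod int n) \<or> (\<exists>k::int. int a = (k * int b) mod int n))"

definition cyc_power_deg :: "nat \<Rightarrow> nat \<Rightarrow> nat" where
  "cyc_power_deg n a = card {b \<in> {0..<n}. cyc_power_adj n a b}"

end

theory Submission
  imports Defs
begin


lemma span_iff:
  fixes n a b :: nat
  assumes "n > 0" "b < n"
  shows "(\<exists>k::int. int b = (k * int a) mod int n) \<longleftrightarrow> gcd a n dvd b"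
proof
  assume "\<exists>k::int. int b = (k * int a) mod int n"
  then obtain k where k: "int b = (k * int a) mod int n" by blast
  have "int b = k * int a - int n * ((k * int a) div int n)"
    using k by (simp add: minus_div_mult_eq_mod [symmetric] algebra_simps)
  moreover have "gcd (int a) (int n) dvd k * int a - int n * ((k * int a) div int n)"
    by (intro dvd_diff dvd_mult dvd_mult2) auto
  ultimately have "gcd (int a) (int n) dvd int b" by simp
  then show "gcd a n dvd b" by (metis gcd_int_int_eq int_dvd_int_iff)
next
  assume "gcd a n dvd b"
  then obtain m where m: "b = gcd a n * m" by blast
  obtain u v where uv: "u * int a + v * int n = gcd (int a) (int n)" using bezout_int by blast
  have "int b = (int m * u * int a + int m * v * int n)"
    using m uv by (simp add: algebra_simps flip: gcd_int_int_eq) (metis distrib_left mult.commute mult.left_commute)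
  hence "int b mod int n = (int m * u * int a) mod int n" by simp
  moreover have "int b mod int n = int b" using assms by simp
  ultimately show "\<exists>k::int. int b = (k * int a) mod int n" by metis
qed

lemma adj_iff:
  fixes n a b :: nat
  assumes "n > 0" "a < n" "b < n"
  shows "cyc_power_adj n a b \<longleftrightarrow> a \<noteq> b \<and> (gcd a n dvd b \<or> gcd b n dvd a)"
  unfolding cyc_power_adj_def using span_iff[OF assms(1) assms(3)] span_iff[OF assms(1) assms(2)] by blast



definition S :: "nat \<Rightarrow> nat \<Rightarrow> nat set" where
  "S n x = {b\<in>{0..<n}. gcd x n dvd b \<or> gcd b n dvd x}"

lemma deg_eq:
  assumes "n > 0" "x < n"
  shows "cyc_power_deg n x = card (S n x) - 1"
proof -
  have "{b \<in> {0..<n}. cyc_power_adj n x b} = S n x - {x}"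
    using adj_iff[OF assms(1) assms(2)] unfolding S_def by auto
  moreover have "x \<in> S n x" using assms unfolding S_def by auto
  ultimately show ?thesis unfolding cyc_power_deg_def by (simp add: S_def)
qed

lemma card_mult:
  assumes "d dvd n" "n > 0"
  shows "card {b\<in>{0..<n}. d dvd b} = n div d"
proof -
  have d0: "d > 0" using assms by (metis dvd_0_left_iff gr0I less_irrefl)
  have "{b\<in>{0..<n}. d dvd b} = (\<lambda>k. k * d) ` {0..<n div d}"
  proof (intro equalityI subsetI)
    fix b assume "b \<in> {b\<in>{0..<n}. d dvd b}"
    hence "b = (b div d) * d" "b < n" by auto
    then obtain k where "b = k * d" "b < n" by blast
    moreover have "k < n div d" using calculation d0 assms
      by (metis div_mult_self_is_m dvd_div_mult_self less_mult_imp_div_less)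
    ultimately show "b \<in> (\<lambda>k. k * d) ` {0..<n div d}" by auto
  next
    fix b assume "b \<in> (\<lambda>k. k * d) ` {0..<n div d}"
    then obtain k where "k \<in> {0..<n div d}" "b = k * d" by (rule imageE)
    hence "b = k * d" "k < n div d" by auto
    moreover have "k * d < n" using calculation assms d0
      by (metis dvd_div_mult_self mult_less_cancel2)
    ultimately show "b \<in> {b\<in>{0..<n}. d dvd b}" by auto
  qed
  moreover have "inj_on (\<lambda>k. k * d) {0..<n div d}" using d0 by (auto simp: inj_on_def)
  ultimately show ?thesis by (simp add: card_image)
qed

lemma card_E:
  assumes "d dvd n" "d < n"
  shows "card {b\<in>{0..<n}. gcd b n = d} = totient (n div d)"
proof -
  have "{b\<in>{0..<n}. gcd b n = d} = {k\<in>{0<..n}. gcd k n = d}"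
    using assms by (auto simp: order.order_iff_strict)
  then show ?thesis using card_gcd_eq_totient[of n d] assms by simp
qed

lemma upper:
  assumes "prime q" "q dvd n" "q < n"
  shows "card (S n q) \<le> n div q + totient n"
proof -
  have n0: "n > 0" using assms by auto
  have "S n q \<subseteq> {b\<in>{0..<n}. q dvd b} \<union> {b\<in>{0..<n}. gcd b n = 1}"
  proof
    fix b assume b: "b \<in> S n q"
    have g: "gcd q n = q" using assms by (simp add: gcd_nat.absorb1)
    show "b \<in> {b\<in>{0..<n}. q dvd b} \<union> {b\<in>{0..<n}. gcd b n = 1}"
    proof (cases "gcd b n dvd q")
      case True
      then have "gcd b n = 1 \<or> gcd b n = q" using assms(1) prime_nat_iff by blast
      then show ?thesis using b unfolding S_def by (auto simp: g)
    next
      case False then show ?thesis using b g unfolding S_def by auto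
    qed
  qed
  hence "card (S n q) \<le> card ({b\<in>{0..<n}. q dvd b} \<union> {b\<in>{0..<n}. gcd b n = 1})"
    by (intro card_mono) auto
  also have "\<dots> \<le> card {b\<in>{0..<n}. q dvd b} + card {b\<in>{0..<n}. gcd b n = 1}"
    by (rule card_Un_le)
  also have "\<dots> = n div q + totient n"
    using card_mult[OF assms(2) n0] card_E[of 1 n] assms prime_gt_1_nat[OF assms(1)] by simp
  finally show ?thesis .
qed

lemma lower:
  assumes "x dvd n" "x < n" "finite D" "\<And>d. d \<in> D \<Longrightarrow> d dvd x \<and> d \<noteq> x"
  shows "n div x + (\<Sum>d\<in>D. totient (n div d)) \<le> card (S n x)"
proof -
  have n0: "n > 0" "x > 0" using assms by (auto intro!: Nat.gr0I)
  have g: "gcd x n = x" using assms by (simp add: gcd_nat.absorb1)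
  let ?M = "{b\<in>{0..<n}. x dvd b}"
  let ?E = "\<lambda>d. {b\<in>{0..<n}. gcd b n = d}"
  have sub: "?M \<union> (\<Union>d\<in>D. ?E d) \<subseteq> S n x"
    using assms(4) unfolding S_def g by auto
  have disj: "?M \<inter> (\<Union>d\<in>D. ?E d) = {}"
  proof (rule ccontr)
    assume "?M \<inter> (\<Union>d\<in>D. ?E d) \<noteq> {}"
    then obtain b d where "d \<in> D" "x dvd b" "gcd b n = d" by auto
    then have "x dvd d" "d dvd x" using assms by auto
    then show False using assms(4)[OF \<open>d \<in> D\<close>] dvd_antisym by blast
  qed
  have cE: "card (?E d) = totient (n div d)" if "d \<in> D" for d
  proof -
    have "d dvd n" "d \<le> x" using assms(4)[OF that] assms(1) n0 dvd_trans dvd_imp_le by blast+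
    then show ?thesis using card_E assms(2) by simp
  qed
  have "card (\<Union>d\<in>D. ?E d) = (\<Sum>d\<in>D. card (?E d))"
    by (intro card_UN_disjoint assms(3)) auto
  also have "\<dots> = (\<Sum>d\<in>D. totient (n div d))" using cE by simp
  finally have cU: "card (\<Union>d\<in>D. ?E d) = (\<Sum>d\<in>D. totient (n div d))" .
  have "n div x + (\<Sum>d\<in>D. totient (n div d)) = card (?M \<union> (\<Union>d\<in>D. ?E d))"
    using card_Un_disjoint[of ?M "\<Union>d\<in>D. ?E d"] disj cU card_mult[OF assms(1) n0(1)] by (simp add: assms(3))
  also have "\<dots> \<le> card (S n x)" by (intro card_mono sub) (auto simp: S_def)
  finally show ?thesis .
qed



lemma arith_final:
  fixes P Q R X Y V W s1 s2 f :: int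
  assumes "P > 0" "Q > 1" "R > 1" "X > 0" "V > 0" "W > 0"
    "P * s1 + X \<ge> Y" "s2 + X \<ge> Y" "Y > X" "Q * f \<ge> V * (Q - 1)" "s2 \<ge> 0"
    "(P + Q) * ((Q - 1) * (R - 1)) > P * Q * R"
  shows "X * V * W * R + s1 * (V * (Q - 1) * (W * (R - 1))) + s2 * (f * (W * (R - 1)))
         > Y * V * W * R"
proof -
  define d where "d = Y - X"
  have d0: "d > 0" using assms d_def by simp
  have c: "Q * (Q - 1) * W * (R - 1) * V \<ge> 0" "P * W * (R - 1) * s2 \<ge> 0"
    using assms by (auto intro!: mult_nonneg_nonneg)
  have e1: "Q * (Q - 1) * W * (R - 1) * V * (P * s1) \<ge> Q * (Q - 1) * W * (R - 1) * V * d"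
    using c(1) assms d_def by (intro mult_left_mono) auto
  have e2: "P * W * (R - 1) * s2 * (Q * f) \<ge> P * W * (R - 1) * s2 * (V * (Q - 1))"
    using c(2) assms by (intro mult_left_mono) auto
  have e3: "P * W * (R - 1) * V * (Q - 1) * s2 \<ge> P * W * (R - 1) * V * (Q - 1) * d"
    using assms d_def by (intro mult_left_mono mult_nonneg_nonneg) auto
  have e4: "V * W * d * ((P + Q) * ((Q - 1) * (R - 1))) > V * W * d * (P * Q * R)"
    using assms d0 by (intro mult_strict_left_mono) auto
  have "P * Q * (X * V * W * R + s1 * (V * (Q - 1) * (W * (R - 1))) + s2 * (f * (W * (R - 1))))
      = P * Q * X * V * W * R + Q * (Q - 1) * W * (R - 1) * V * (P * s1) + P * W * (R - 1) * s2 * (Q * f)"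
    by (simp add: algebra_simps)
  also have "\<dots> \<ge> P * Q * X * V * W * R + Q * (Q - 1) * W * (R - 1) * V * d + P * W * (R - 1) * V * (Q - 1) * d"
    using e1 e2 e3 by (simp add: algebra_simps)
  finally have "P * Q * (X * V * W * R + s1 * (V * (Q - 1) * (W * (R - 1))) + s2 * (f * (W * (R - 1))))
      \<ge> P * Q * X * V * W * R + V * W * d * ((P + Q) * ((Q - 1) * (R - 1)))"
    by (simp add: algebra_simps)
  moreover have "P * Q * X * V * W * R + V * W * d * ((P + Q) * ((Q - 1) * (R - 1))) >
     P * Q * X * V * W * R + V * W * d * (P * Q * R)" using e4 by simp
  moreover have "P * Q * X * V * W * R + V * W * d * (P * Q * R) = P * Q * (Y * V * W * R)"
    by (simp add: d_def algebra_simps)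
  ultimately have "P * Q * (X * V * W * R + s1 * (V * (Q - 1) * (W * (R - 1))) + s2 * (f * (W * (R - 1))))
     > P * Q * (Y * V * W * R)" by linarith
  then show ?thesis using assms by (smt (verit) mult_le_cancel_left mult_pos_pos)
qed

lemma sum1:
  assumes "prime p" "\<beta> \<le> a"
  shows "p * (\<Sum>s\<in>{1..\<beta>}. totient (p ^ (a - s))) + p ^ (a - \<beta>) \<ge> p ^ a"
  using assms(2)
proof (induction \<beta>)
  case 0 then show ?case by simp
next
  case (Suc m)
  have p1: "p > 1" using assms prime_gt_1_nat by blast
  have e: "a - m = Suc (a - Suc m)" using Suc by simp
  have t: "totient (p ^ (a - m)) = p ^ (a - Suc m) * (p - 1)"
    using totient_prime_power_Suc[OF assms(1)] e by simp
  have "p * (\<Sum>s\<in>{1..Suc m}. totient (p ^ (a - s))) + p ^ (a - Suc m)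
     = p * (\<Sum>s\<in>{1..m}. totient (p ^ (a - s))) + p * totient (p ^ (a - Suc m)) + p ^ (a - Suc m)"
    by (simp add: algebra_simps)
  also have "p * totient (p ^ (a - Suc m)) + p ^ (a - Suc m) \<ge> p ^ (a - m)"
  proof (cases "a - Suc m")
    case 0 then show ?thesis using e p1 by simp
  next
    case (Suc r)
    then have "totient (p ^ (a - Suc m)) = p ^ r * (p - 1)"
      using totient_prime_power_Suc[OF assms(1)] by simp
    then show ?thesis using Suc e p1
      by (simp add: algebra_simps)
  qed
  then have "p * (\<Sum>s\<in>{1..m}. totient (p ^ (a - s))) + p * totient (p ^ (a - Suc m)) + p ^ (a - Suc m)
     \<ge> p * (\<Sum>s\<in>{1..m}. totient (p ^ (a - s))) + p ^ (a - m)" by simp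
  finally show ?case using Suc by simp
qed

lemma sum2:
  assumes "prime p" "\<beta> \<le> a"
  shows "(\<Sum>s<\<beta>. totient (p ^ (a - s))) + p ^ (a - \<beta>) \<ge> p ^ a"
  using assms(2)
proof (induction \<beta>)
  case 0 then show ?case by simp
next
  case (Suc m)
  have p1: "p > 1" using assms prime_gt_1_nat by blast
  have e: "a - m = Suc (a - Suc m)" using Suc by simp
  have t: "totient (p ^ (a - m)) = p ^ (a - Suc m) * (p - 1)"
    using totient_prime_power_Suc[OF assms(1)] e by simp
  have "totient (p ^ (a - m)) + p ^ (a - Suc m) = p ^ (a - m)"
    using t e p1 by (simp add: algebra_simps)
  then show ?case using Suc by simp
qed



lemma cop_pow: "prime (p::nat) \<Longrightarrow> prime q \<Longrightarrow> p \<noteq> q \<Longrightarrow> coprime (p ^ x) (q ^ y)"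
  using primes_coprime[of p q] by simp

lemma tot3:
  assumes "prime P" "prime Q" "prime R" "P \<noteq> Q" "P \<noteq> R" "Q \<noteq> R"
  shows "totient (P ^ x * Q ^ y * R ^ z) = totient (P ^ x) * totient (Q ^ y) * totient (R ^ z)"
proof -
  have "coprime (P ^ x * Q ^ y) (R ^ z)"
    using primes_coprime[of P R] primes_coprime[of Q R] assms by simp
  moreover have "coprime (P ^ x) (Q ^ y)" using primes_coprime[of P Q] assms by simp
  ultimately show ?thesis by (simp add: totient_mult_coprime)
qed

lemma main:
  fixes P Q R a b c \<beta> n :: nat
  assumes pr: "prime P" "prime Q" "prime R" and ne: "P \<noteq> Q" "P \<noteq> R" "Q \<noteq> R"
    and ex: "a \<ge> 1" "b \<ge> 1" "c \<ge> 1" "1 \<le> \<beta>" "\<beta> \<le> a"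
    and n: "n = P ^ a * Q ^ b * R ^ c"
    and cond: "(P + Q) * ((Q - 1) * (R - 1)) > P * Q * R"
  shows "cyc_power_deg n ((P ^ \<beta> * Q) mod n) > cyc_power_deg n (Q mod n)"
proof -
  have P1: "P > 1" and Q1: "Q > 1" and R1: "R > 1" using pr prime_gt_1_nat by auto
  have n0: "n > 0" using n P1 Q1 R1 by simp
  define x where "x = P ^ \<beta> * Q"
  have Pa0: "P ^ a = P ^ (a - \<beta>) * P ^ \<beta>" using ex by (simp flip: power_add)
  have Qb0: "Q ^ b = Q ^ (b - 1) * Q" using ex by (cases b) auto
  have nx: "n = x * (P ^ (a - \<beta>) * Q ^ (b - 1) * R ^ c)"
    using n Pa0 Qb0 by (simp add: x_def algebra_simps)
  have nq: "n = Q * (P ^ a * Q ^ (b - 1) * R ^ c)"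
    using n ex by (cases b) (auto simp: algebra_simps)
  have xdvd: "x dvd n" using nx by simp
  have qdvd: "Q dvd n" using nq by simp
  have rest_gt: "P ^ (a - \<beta>) * Q ^ (b - 1) * R ^ c > 1"
  proof -
    have "R ^ c > 1" using one_less_power[of R c] R1 ex by simp
    moreover have "P ^ (a - \<beta>) * Q ^ (b - 1) \<ge> 1" using P1 Q1 by simp
    ultimately show ?thesis using mult_right_mono[of 1 _ "R ^ c"] by (simp add: less_le_trans)
  qed
  have x0: "x > 0" using P1 Q1 x_def by simp
  have xlt: "x < n" using nx rest_gt x0 by simp
  have q_rest: "P ^ a * Q ^ (b - 1) * R ^ c > 1"
  proof -
    have "R ^ c > 1" using one_less_power[of R c] R1 ex by simp
    moreover have "P ^ a * Q ^ (b - 1) \<ge> 1" using P1 Q1 by simp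
    ultimately show ?thesis using mult_right_mono[of 1 _ "R ^ c"] by (simp add: less_le_trans)
  qed
  have qlt: "Q < n" using nq q_rest Q1 by simp
  have divx: "n div x = P ^ (a - \<beta>) * Q ^ (b - 1) * R ^ c" using nx x0 by simp
  have divq: "n div Q = P ^ a * Q ^ (b - 1) * R ^ c" using nq Q1 by simp
  define D1 where "D1 = (\<lambda>s. P ^ s) ` {1..\<beta>}"
  define D2 where "D2 = (\<lambda>s. P ^ s * Q) ` {..<\<beta>}"
  define D where "D = insert 1 (D1 \<union> D2)"
  have QnP: "\<not> Q dvd P ^ s" for s
  proof
    assume "Q dvd P ^ s"
    then have "Q dvd P" using pr(2) prime_dvd_power by blast
    then show False using pr ne primes_dvd_imp_eq by blast
  qed
  have injP: "inj_on (\<lambda>s. P ^ s) {1..\<beta>}" using P1 by (auto simp: inj_on_def power_inject_exp)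
  have injPQ: "inj_on (\<lambda>s. P ^ s * Q) {..<\<beta>}" using P1 Q1 by (auto simp: inj_on_def power_inject_exp)
  have Dprop: "d dvd x \<and> d \<noteq> x" if dD: "d \<in> D" for d
  proof -
    consider "d = 1" | "d \<in> D1" | "d \<in> D2" using dD D_def by auto
    then show ?thesis
    proof cases
      case 1 then show ?thesis using x_def P1 Q1 by simp
    next
      case 2
      then obtain s where s: "s \<in> {1..\<beta>}" "d = P ^ s" using D1_def by auto
      have "P ^ s dvd P ^ \<beta>" using s by (simp add: le_imp_power_dvd)
      then have "d dvd x" using s x_def by simp
      moreover have "d \<noteq> x" using s QnP x_def by (metis dvd_triv_right)
      ultimately show ?thesis by simp
    next
      case 3
      then obtain s where s: "s < \<beta>" "d = P ^ s * Q" using D2_def by auto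
      have "P ^ s dvd P ^ \<beta>" using s by (simp add: le_imp_power_dvd)
      then have "d dvd x" using s x_def by simp
      moreover have "d \<noteq> x" using s x_def P1 Q1 power_inject_exp by fastforce
      ultimately show ?thesis by simp
    qed
  qed
  have finD: "finite D" using D_def D1_def D2_def by simp
  have low: "n div x + (\<Sum>d\<in>D. totient (n div d)) \<le> card (S n x)"
    by (rule lower[OF xdvd xlt finD Dprop])
  have one_notin: "1 \<notin> D1 \<union> D2"
  proof
    assume "1 \<in> D1 \<union> D2"
    then consider s where "s \<in> {1..\<beta>}" "1 = P ^ s" | s where "1 = P ^ s * Q"
      unfolding D1_def D2_def by blast
    then show False
    proof cases
      case 1
      then have "P ^ s > 1" using one_less_power[of P s] P1 by simp
      then show False using 1 by simp
    next
      case 2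
      then have "P ^ s * Q = 1" by simp
      then show False using Q1 by simp
    qed
  qed
  have D12: "D1 \<inter> D2 = {}"
  proof (rule ccontr)
    assume "D1 \<inter> D2 \<noteq> {}"
    then obtain s t where "P ^ s = P ^ t * Q" unfolding D1_def D2_def by blast
    then have "Q dvd P ^ s" by simp
    then show False using QnP by blast
  qed
  have sumD: "(\<Sum>d\<in>D. totient (n div d)) = totient n + (\<Sum>s\<in>{1..\<beta>}. totient (n div P ^ s))
      + (\<Sum>s<\<beta>. totient (n div (P ^ s * Q)))"
  proof -
    have "(\<Sum>d\<in>D. totient (n div d)) = totient n + (\<Sum>d\<in>D1 \<union> D2. totient (n div d))"
      unfolding D_def using one_notin D1_def D2_def by (simp add: sum.insert)
    also have "(\<Sum>d\<in>D1 \<union> D2. totient (n div d)) = (\<Sum>d\<in>D1. totient (n div d)) + (\<Sum>d\<in>D2. totient (n div d))"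
      using D12 D1_def D2_def by (simp add: sum.union_disjoint)
    also have "(\<Sum>d\<in>D1. totient (n div d)) = (\<Sum>s\<in>{1..\<beta>}. totient (n div P ^ s))"
      unfolding D1_def using sum.reindex[OF injP, of "\<lambda>d. totient (n div d)"] by (simp add: comp_def)
    also have "(\<Sum>d\<in>D2. totient (n div d)) = (\<Sum>s<\<beta>. totient (n div (P ^ s * Q)))"
      unfolding D2_def using sum.reindex[OF injPQ, of "\<lambda>d. totient (n div d)"] by (simp add: comp_def)
    finally show ?thesis by simp
  qed
  have t1: "totient (n div P ^ s) = totient (P ^ (a - s)) * (totient (Q ^ b) * totient (R ^ c))"
    if "s \<in> {1..\<beta>}" for s
  proof -
    have "P ^ a = P ^ s * P ^ (a - s)" using that ex by (simp flip: power_add)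
    then have "n = P ^ s * (P ^ (a - s) * Q ^ b * R ^ c)"
      using n by (simp add: mult.assoc)
    then have "n div P ^ s = P ^ (a - s) * Q ^ b * R ^ c" using P1 by simp
    then show ?thesis using tot3[OF pr ne] by simp
  qed
  have t2: "totient (n div (P ^ s * Q)) = totient (P ^ (a - s)) * (totient (Q ^ (b - 1)) * totient (R ^ c))"
    if "s < \<beta>" for s
  proof -
    have "P ^ a = P ^ s * P ^ (a - s)" using that ex by (simp flip: power_add)
    then have "n = (P ^ s * Q) * (P ^ (a - s) * Q ^ (b - 1) * R ^ c)"
      using nq by (simp add: ac_simps)
    then have "n div (P ^ s * Q) = P ^ (a - s) * Q ^ (b - 1) * R ^ c" using P1 Q1 by simp
    then show ?thesis using tot3[OF pr ne] by simp
  qed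
  define s1 where "s1 = (\<Sum>s\<in>{1..\<beta>}. totient (P ^ (a - s)))"
  define s2 where "s2 = (\<Sum>s<\<beta>. totient (P ^ (a - s)))"
  have S1: "(\<Sum>s\<in>{1..\<beta>}. totient (n div P ^ s)) = s1 * (totient (Q ^ b) * totient (R ^ c))"
    unfolding s1_def using t1 by (simp add: sum_distrib_right)
  have S2: "(\<Sum>s<\<beta>. totient (n div (P ^ s * Q))) = s2 * (totient (Q ^ (b - 1)) * totient (R ^ c))"
    unfolding s2_def using t2 by (simp add: sum_distrib_right)
  have up: "card (S n Q) \<le> n div Q + totient n" by (rule upper[OF pr(2) qdvd qlt])
  have tQ: "totient (Q ^ b) = Q ^ (b - 1) * (Q - 1)" using totient_prime_power[OF pr(2)] ex by simp
  have tR: "totient (R ^ c) = R ^ (c - 1) * (R - 1)" using totient_prime_power[OF pr(3)] ex by simp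
  have Rc: "R ^ c = R ^ (c - 1) * R" using ex by (cases c) auto
  have tQ1: "Q * totient (Q ^ (b - 1)) \<ge> Q ^ (b - 1) * (Q - 1)"
  proof (cases "b - 1")
    case 0 then show ?thesis by simp
  next
    case (Suc r) then show ?thesis using totient_prime_power_Suc[OF pr(2), of r] by simp
  qed
  have Pa: "P ^ a = P ^ (a - \<beta>) * P ^ \<beta>" using ex by (simp flip: power_add)
  have Pb: "P ^ \<beta> \<ge> 2"
  proof -
    have "P ^ 1 \<le> P ^ \<beta>" using P1 ex by (intro power_increasing) auto
    then show ?thesis using P1 by simp
  qed
  have YX: "P ^ a > P ^ (a - \<beta>)" using Pa Pb P1 by simp
  have key: "int (P ^ (a - \<beta>)) * int (Q ^ (b - 1)) * int (R ^ (c - 1)) * int R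
      + int s1 * (int (Q ^ (b - 1)) * (int Q - 1) * (int (R ^ (c - 1)) * (int R - 1)))
      + int s2 * (int (totient (Q ^ (b - 1))) * (int (R ^ (c - 1)) * (int R - 1)))
      > int (P ^ a) * int (Q ^ (b - 1)) * int (R ^ (c - 1)) * int R"
  proof (rule arith_final)
    show "0 < int P" "1 < int Q" "1 < int R" using P1 Q1 R1 by auto
    show "0 < int (P ^ (a - \<beta>))" "0 < int (Q ^ (b - 1))" "0 < int (R ^ (c - 1))" using P1 Q1 R1 by auto
    show "int (P ^ a) \<le> int P * int s1 + int (P ^ (a - \<beta>))"
    proof -
      have "P ^ a \<le> P * s1 + P ^ (a - \<beta>)" using sum1[OF pr(1) ex(5)] unfolding s1_def by simp
      then show ?thesis by (metis of_nat_add of_nat_mult of_nat_le_iff)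
    qed
    show "int (P ^ a) \<le> int s2 + int (P ^ (a - \<beta>))"
    proof -
      have "P ^ a \<le> s2 + P ^ (a - \<beta>)" using sum2[OF pr(1) ex(5)] unfolding s2_def by simp
      then show ?thesis by (metis of_nat_add of_nat_le_iff)
    qed
    show "int (P ^ (a - \<beta>)) < int (P ^ a)" using YX by (simp only: of_nat_less_iff)
    have iQ: "int (Q - 1) = int Q - 1" "int (R - 1) = int R - 1" using Q1 R1 by auto
    show "int (Q ^ (b - 1)) * (int Q - 1) \<le> int Q * int (totient (Q ^ (b - 1)))"
      using tQ1 iQ by (metis of_nat_le_iff of_nat_mult)
    show "0 \<le> int s2" by simp
    show "int P * int Q * int R < (int P + int Q) * ((int Q - 1) * (int R - 1))"
      using cond iQ by (metis of_nat_less_iff of_nat_mult of_nat_add)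
  qed
  have key': "P ^ (a - \<beta>) * Q ^ (b - 1) * R ^ c + s1 * (totient (Q ^ b) * totient (R ^ c))
      + s2 * (totient (Q ^ (b - 1)) * totient (R ^ c)) > P ^ a * Q ^ (b - 1) * R ^ c"
  proof -
    have "int (P ^ (a - \<beta>) * Q ^ (b - 1) * R ^ c + s1 * (totient (Q ^ b) * totient (R ^ c))
      + s2 * (totient (Q ^ (b - 1)) * totient (R ^ c))) > int (P ^ a * Q ^ (b - 1) * R ^ c)"
    proof -
      have iQ: "int (Q - 1) = int Q - 1" "int (R - 1) = int R - 1" using Q1 R1 by auto
      have "int (P ^ (a - \<beta>) * Q ^ (b - 1) * R ^ c + s1 * (totient (Q ^ b) * totient (R ^ c))
         + s2 * (totient (Q ^ (b - 1)) * totient (R ^ c))) =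
        int (P ^ (a - \<beta>)) * int (Q ^ (b - 1)) * int (R ^ (c - 1)) * int R
      + int s1 * (int (Q ^ (b - 1)) * (int Q - 1) * (int (R ^ (c - 1)) * (int R - 1)))
      + int s2 * (int (totient (Q ^ (b - 1))) * (int (R ^ (c - 1)) * (int R - 1)))"
        unfolding tQ tR unfolding Rc of_nat_add of_nat_mult iQ by (simp only: mult.assoc)
      moreover have "int (P ^ a * Q ^ (b - 1) * R ^ c) = int (P ^ a) * int (Q ^ (b - 1)) * int (R ^ (c - 1)) * int R"
        unfolding Rc of_nat_mult by (simp only: mult.assoc)
      ultimately show ?thesis using key by (simp only:)
    qed
    then show ?thesis by linarith
  qed
  have "card (S n x) > card (S n Q)"
    using low sumD S1 S2 up divx divq key' by linarith
  moreover have "card (S n Q) \<ge> 1"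
  proof -
    have "Q \<in> S n Q" using qlt unfolding S_def by auto
    then show ?thesis using card_0_eq[of "S n Q"] by (fastforce simp: S_def)
  qed
  ultimately show ?thesis using deg_eq[OF n0 xlt] deg_eq[OF n0 qlt] x_def xlt qlt by simp
qed

lemma cond_conv:
  fixes P Q R :: nat
  assumes "prime P" "prime Q" "prime R" "Q \<noteq> R"
    and "int (P + Q) * int (totient (Q * R)) - int (P * Q * R) > 0"
  shows "(P + Q) * ((Q - 1) * (R - 1)) > P * Q * R"
proof -
  have "totient (Q * R) = (Q - 1) * (R - 1)"
    using assms primes_coprime[of Q R] by (simp add: totient_mult_coprime totient_prime)
  then show ?thesis using assms(5) by (metis of_nat_less_iff of_nat_mult diff_gt_0_iff_gt)
qed

lemma cases3: "{i, j, k} = {1, 2, (3::nat)} \<Longrightarrow> i < j \<Longrightarrow> (i = 1 \<and> j = 2 \<and> k = 3) \<or> (i = 1 \<and> j = 3 \<and> k = 2) \<or> (i = 2 \<and> j = 3 \<and> k = 1)"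
proof -
  assume a: "{i, j, k} = {1, 2, (3::nat)}" "i < j"
  have m: "i \<in> {1,2,3}" "j \<in> {1,2,3}" "3 \<in> {i,j,k}" "2 \<in> {i,j,k}" "1 \<in> {i,j,k}"
    using a(1) by blast+
  have h: "i = 1 \<or> i = 2 \<or> i = 3" "j = 1 \<or> j = 2 \<or> j = 3"
     "2 = i \<or> 2 = j \<or> 2 = k" "3 = i \<or> 3 = j \<or> 3 = k" "1 = i \<or> 1 = j \<or> 1 = k"
    using m by simp_all
  have "(i = 1 \<and> j = 2) \<or> (i = 1 \<and> j = 3) \<or> (i = 2 \<and> j = 3)" using h(1,2) a(2) by (elim disjE) simp_all
  then show ?thesis
  proof (elim disjE conjE)
    assume "i = 1" "j = 2" then have "k = 3" using h(4) by auto
    then show ?thesis using \<open>i = 1\<close> \<open>j = 2\<close> by blast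
  next
    assume "i = 1" "j = 3" then have "k = 2" using h(3) by auto
    then show ?thesis using \<open>i = 1\<close> \<open>j = 3\<close> by blast
  next
    assume "i = 2" "j = 3" then have "k = 1" using h(5) by auto
    then show ?thesis using \<open>i = 2\<close> \<open>j = 3\<close> by blast
  qed
qed

theorem lemma5p2:
  fixes p \<alpha> :: "nat \<Rightarrow> nat" and n i j k :: nat
  assumes "prime (p 1)" "prime (p 2)" "prime (p 3)"
    and "p 1 < p 2" "p 2 < p 3"
    and "\<alpha> 1 \<ge> 1" "\<alpha> 2 \<ge> 1" "\<alpha> 3 \<ge> 1"
    and "n = p 1 ^ \<alpha> 1 * p 2 ^ \<alpha> 2 * p 3 ^ \<alpha> 3"
    and "{i, j, k} = {1, 2, 3}" and "i < j"
    and "int (p i + p j) * int (totient (p j * p k)) - int (p i * p j * p k) > 0"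
  shows "\<forall>\<beta>. 1 \<le> \<beta> \<and> \<beta> \<le> \<alpha> i \<longrightarrow>
           cyc_power_deg n ((p i ^ \<beta> * p j) mod n) > cyc_power_deg n (p j mod n)"
proof (intro allI impI)
  fix \<beta> assume b: "1 \<le> \<beta> \<and> \<beta> \<le> \<alpha> i"
  have b1: "1 \<le> \<beta>" using b by simp
  have ne: "p 1 \<noteq> p 2" "p 1 \<noteq> p 3" "p 2 \<noteq> p 3" using assms(4,5) by auto
  have cs: "(i = 1 \<and> j = 2 \<and> k = 3) \<or> (i = 1 \<and> j = 3 \<and> k = 2) \<or> (i = 2 \<and> j = 3 \<and> k = 1)"
    using cases3[OF assms(10) assms(11)] .
  from cs show "cyc_power_deg n ((p i ^ \<beta> * p j) mod n) > cyc_power_deg n (p j mod n)"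
  proof (elim disjE conjE)
    assume h: "i = 1" "j = 2" "k = 3"
    have c: "(p 1 + p 2) * ((p 2 - 1) * (p 3 - 1)) > p 1 * p 2 * p 3"
      using cond_conv[OF assms(1,2,3) ne(3)] assms(12) unfolding h by blast
    have b2: "\<beta> \<le> \<alpha> 1" using b h by simp
    show ?thesis unfolding h
      by (rule main[OF assms(1,2,3) ne(1,2,3) assms(6,7,8) b1 b2 assms(9) c])
  next
    assume h: "i = 1" "j = 3" "k = 2"
    have c: "(p 1 + p 3) * ((p 3 - 1) * (p 2 - 1)) > p 1 * p 3 * p 2"
      using cond_conv[OF assms(1,3,2) ne(3)[symmetric]] assms(12) unfolding h by blast
    have b2: "\<beta> \<le> \<alpha> 1" using b h by simp
    have nn: "n = p 1 ^ \<alpha> 1 * p 3 ^ \<alpha> 3 * p 2 ^ \<alpha> 2" using assms(9) by (simp add: ac_simps)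
    show ?thesis unfolding h
      by (rule main[OF assms(1,3,2) ne(2,1) ne(3)[symmetric] assms(6,8,7) b1 b2 nn c])
  next
    assume h: "i = 2" "j = 3" "k = 1"
    have c: "(p 2 + p 3) * ((p 3 - 1) * (p 1 - 1)) > p 2 * p 3 * p 1"
      using cond_conv[OF assms(2,3,1) ne(2)[symmetric]] assms(12) unfolding h by blast
    have b2: "\<beta> \<le> \<alpha> 2" using b h by simp
    have nn: "n = p 2 ^ \<alpha> 2 * p 3 ^ \<alpha> 3 * p 1 ^ \<alpha> 1" using assms(9) by (simp add: ac_simps)
    show ?thesis unfolding h
      by (rule main[OF assms(2,3,1) ne(3) ne(1)[symmetric] ne(2)[symmetric] assms(7,8,6) b1 b2 nn c])
  qed
qed


end
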